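(* For every $m\in\mathbb N$ there exists $L_4(m)\in\mathbb N$ with the following property: whenever $\varepsilon_1,\dots,\varepsilon_m\in\{\pm1\}$ and $1\le i_1\le\dots\le i_m$ are integers such that $i_j-i_{j-1}>L_4(m)$ for some $j\in\{2,\dots,m\}$, then $$\varepsilon_1a_{i_1}+\dots+\varepsilon_ma_{i_m}=0\quad\text{implies}\quad\varepsilon_1a_{i_1}+\dots+\varepsilon_{j-1}a_{i_{j-1}}=\varepsilon_ja_{i_j}+\dots+\varepsilon_ma_{i_m}=0.$$ Moreover, $L_4(m)$ can be chosen to be increasing in $m$.
   Context: Standing setting: $d\in\mathbb N$; $\lambda_1,\dots,\lambda_d\in\mathbb C$ are the roots of an irreducible polynomial of degree $d$ with integer coefficients; $c_1,\dots,c_d\in\mathbb C$; the dominant root condition holds: $\lambda_1$ is real, $\lambda_1>1$, $\lambda_1>\max\{|\lambda_2|,\dots,|\lambda_d|\}$, $c_1\ne0$; $a_n=c_1\lambda_1^n+\dots+c_d\lambda_d^n$ is a positive integer for every $n\in\mathbb N$. *)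

theory Defs
  imports "HOL-Analysis.Analysis" "HOL-Computational_Algebra.Polynomial"
begin

definition lrs :: "nat \<Rightarrow> (nat \<Rightarrow> complex) \<Rightarrow> (nat \<Rightarrow> complex) \<Rightarrow> nat \<Rightarrow> complex" where
  "lrs d c lam n = (\<Sum>k=1..d. c k * lam k ^ n)"

definition standing_setting :: "nat \<Rightarrow> (nat \<Rightarrow> complex) \<Rightarrow> (nat \<Rightarrow> complex) \<Rightarrow> bool" where
  "standing_setting d c lam \<longleftrightarrow>
     (\<exists>p :: int poly. degree p = d \<and> irreducible p \<and>
        inj_on lam {1..d} \<and>
        {z. poly (map_poly of_int p) z = 0} = lam ` {1..d}) \<and>
     1 \<le> d \<and>
     lam 1 \<in> \<real> \<and> Re (lam 1) > 1 \<and>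
     (\<forall>k\<in>{2..d}. norm (lam k) < Re (lam 1)) \<and>
     c 1 \<noteq> 0 \<and>
     (\<forall>n\<ge>1. \<exists>z::int. z > 0 \<and> lrs d c lam n = of_int z)"

end

theory Submission imports Defs "HOL-Computational_Algebra.Polynomial_Factorial" begin

abbreviation ev :: "int poly \<Rightarrow> complex \<Rightarrow> complex" where
  "ev Q z \<equiv> poly (map_poly of_int Q) z"

lemma ev_add: "ev (A + B) z = ev A z + ev B z"
proof -
  have "map_poly (of_int :: int \<Rightarrow> complex) (A + B) = map_poly of_int A + map_poly of_int B"
    by (intro poly_eqI) (simp add: coeff_map_poly)
  thus ?thesis by simp
qed

lemma ev_smult: "ev (smult a A) z = of_int a * ev A z"
  by (simp add: map_poly_smult)

lemma ev_pCons: "ev (pCons a A) z = of_int a + z * ev A z"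
  by (simp add: map_poly_pCons)

lemma ev_mult: "ev (A * B) z = ev A z * ev B z"
proof (induction A)
  case 0
  then show ?case by simp
next
  case (pCons a A)
  have "ev (pCons a A * B) z = ev (smult a B + pCons 0 (A * B)) z" by simp
  also have "\<dots> = of_int a * ev B z + z * ev (A * B) z"
    by (simp only: ev_add ev_smult ev_pCons) simp
  also have "\<dots> = ev (pCons a A) z * ev B z"
    using pCons.IH by (simp add: ev_pCons algebra_simps)
  finally show ?case .
qed

lemma galois_min:
  fixes p :: "int poly" and z :: complex
  assumes irr: "irreducible p" and dp: "degree p \<noteq> 0" and pz: "ev p z = 0"
  shows "R \<noteq> 0 \<Longrightarrow> ev R z = 0 \<Longrightarrow> degree p \<le> degree R"
proof (induction "degree R" arbitrary: R rule: less_induct)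
  case less
  show ?case
  proof (rule ccontr)
    assume lt: "\<not> degree p \<le> degree R"
    define r where "r = pseudo_mod p R"
    from pseudo_mod[OF less.prems(1), of p] obtain a q where
      a: "a \<noteq> 0" and eq: "smult a p = R * q + r" and dr: "r = 0 \<or> degree r < degree R"
      unfolding r_def by blast
    have "ev r z = 0"
    proof -
      have "ev (smult a p) z = ev (R * q + r) z" using eq by simp
      thus ?thesis using pz less.prems(2) by (simp add: ev_mult ev_add ev_smult)
    qed
    have r0: "r = 0"
    proof (rule ccontr)
      assume "r \<noteq> 0"
      with dr have "degree r < degree R" by auto
      from less.hyps[OF this \<open>r \<noteq> 0\<close> \<open>ev r z = 0\<close>] this lt show False by simp
    qed
    with eq have eq2: "smult a p = R * q" by simp
    have pr: "prime_elem p" by (rule irreducible_imp_prime_poly[OF irr])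
    have "p dvd R * q" unfolding eq2[symmetric] by (rule dvd_smult) simp
    hence "p dvd R \<or> p dvd q" using pr prime_elem_dvd_mult_iff by blast
    thus False
    proof
      assume "p dvd R"
      hence "degree p \<le> degree R" using less.prems(1) by (simp add: dvd_imp_degree_le)
      with lt show False by simp
    next
      assume "p dvd q"
      then obtain q' where q': "q = p * q'" by (auto elim: dvdE)
      have p0: "p \<noteq> 0" using dp by auto
      have "p * [:a:] = p * (R * q')" using eq2 q' by (simp add: algebra_simps)
      hence "[:a:] = R * q'" using p0 mult_left_cancel by blast
      hence "degree (R * q') = 0" by (metis degree_pCons_0)
      moreover have "q' \<noteq> 0" using \<open>[:a:] = R * q'\<close> a by auto
      ultimately have "degree R = 0" using less.prems(1) by (simp add: degree_mult_eq)
      then obtain b where "R = [:b:]" by (auto elim: degree_eq_zeroE)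
      with less.prems show False by (simp add: ev_pCons)
    qed
  qed
qed

lemma galois:
  fixes p :: "int poly" and z w :: complex
  assumes irr: "irreducible p" and dp: "degree p \<noteq> 0" and pz: "ev p z = 0"
    and pw: "ev p w = 0" and Pz: "ev P z = 0"
  shows "ev P w = 0"
proof -
  have p0: "p \<noteq> 0" using dp by auto
  define r where "r = pseudo_mod P p"
  from pseudo_mod[OF p0, of P] obtain a q where
    a: "a \<noteq> 0" and eq: "smult a P = p * q + r" and dr: "r = 0 \<or> degree r < degree p"
    unfolding r_def by blast
  have "ev r z = 0"
  proof -
    have "ev (smult a P) z = ev (p * q + r) z" using eq by simp
    thus ?thesis using pz Pz by (simp add: ev_mult ev_add ev_smult)
  qed
  have "r = 0"
  proof (rule ccontr)
    assume "r \<noteq> 0"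
    with galois_min[OF irr dp pz, of r] \<open>ev r z = 0\<close> have "degree p \<le> degree r" by auto
    with dr \<open>r \<noteq> 0\<close> show False by auto
  qed
  have "ev (smult a P) w = ev (p * q + r) w" using eq by simp
  hence "of_int a * ev P w = 0" using pw \<open>r = 0\<close> by (simp add: ev_mult ev_add ev_smult)
  thus ?thesis using a by simp
qed


lemma ev_monom: "ev (monom a n) z = of_int a * z ^ n"
  by (simp add: map_poly_monom poly_monom)

lemma ev_sum: "ev (\<Sum>k\<in>K. f k) z = (\<Sum>k\<in>K. ev (f k) z)"
  by (induction K rule: infinite_finite_induct) (simp_all add: ev_add)

lemma finite_delta:
  fixes Q :: "'a \<Rightarrow> real \<Rightarrow> bool"
  assumes "finite S" "\<forall>x\<in>S. \<exists>\<delta>>0. Q x \<delta>"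
    "\<And>x \<delta> \<delta>'. Q x \<delta> \<Longrightarrow> 0 < \<delta>' \<Longrightarrow> \<delta>' \<le> \<delta> \<Longrightarrow> Q x \<delta>'"
  shows "\<exists>\<delta>>0. \<forall>x\<in>S. Q x \<delta>"
  using assms(1,2)
proof (induction S rule: finite_induct)
  case empty
  then show ?case by (intro exI[of _ 1]) auto
next
  case (insert x F)
  then obtain \<delta>1 where d1: "\<delta>1 > 0" "\<forall>y\<in>F. Q y \<delta>1" by auto
  from insert obtain \<delta>2 where d2: "\<delta>2 > 0" "Q x \<delta>2" by auto
  show ?case
    by (rule exI[of _ "min \<delta>1 \<delta>2"]) (use d1 d2 assms(3) in auto)
qed

lemma chain_mono:
  fixes e :: "nat \<Rightarrow> nat"
  assumes "\<forall>k\<in>{2..m}. e (k - 1) \<le> e k" "1 \<le> k" "k \<le> k'" "k' \<le> m"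
  shows "e k \<le> e k'"
  using assms(3,4)
proof (induction k' rule: dec_induct)
  case base
  then show ?case by simp
next
  case (step n)
  have "Suc n \<in> {2..m}" using step assms(2) by auto
  then have "e (Suc n - 1) \<le> e (Suc n)" using assms(1) by blast
  then have "e n \<le> e (Suc n)" by simp
  with step show ?case by simp
qed

lemma chain_gap:
  fixes e :: "nat \<Rightarrow> nat"
  assumes "\<forall>k\<in>{2..m}. e k \<le> e (k - 1) + G" "1 \<le> k" "k \<le> m"
  shows "e k \<le> e 1 + (k - 1) * G"
  using assms(2,3)
proof (induction k rule: dec_induct)
  case base
  then show ?case by simp
next
  case (step n)
  have "Suc n \<in> {2..m}" using step by auto
  then have "e (Suc n) \<le> e (Suc n - 1) + G" using assms(1) by blast
  then have "e (Suc n) \<le> e n + G" by simp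
  with step show ?case by (cases n) auto
qed

lemma sum_split:
  fixes j m :: nat
  assumes "1 \<le> j" "j \<le> m + 1"
  shows "sum f {1..m} = sum f {1..j-1} + sum f {j..m}"
proof -
  have "{1..m} = {1..j-1} \<union> {j..m}" using assms by (auto simp: le_diff_conv2)
  moreover have "{1..j-1} \<inter> {j..m} = {}" by auto
  ultimately show ?thesis by (simp add: sum.union_disjoint)
qed

lemma sum_shift:
  fixes j m :: nat
  assumes "1 \<le> j" "j \<le> m"
  shows "sum f {j..m} = (\<Sum>k=1..m-j+1. f (k + j - 1))"
  by (rule sum.reindex_bij_witness[where j="\<lambda>k. k + 1 - j" and i="\<lambda>k. k + j - 1"]) (use assms in auto)

context
  fixes d :: nat and c lam :: "nat \<Rightarrow> complex"
  assumes ss: "standing_setting d c lam"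
begin

abbreviation "rr \<equiv> Re (lam 1)"
abbreviation "aa \<equiv> lrs d c lam"

lemma rr_gt1: "rr > 1"
  using ss unfolding standing_setting_def by auto

lemma d_ge1: "1 \<le> d"
  using ss unfolding standing_setting_def by auto

lemma lam1: "lam 1 = complex_of_real rr"
  using ss unfolding standing_setting_def by (auto simp: Reals_def)

lemma norm_lam_le: "l \<in> {1..d} \<Longrightarrow> norm (lam l) \<le> rr"
proof -
  assume l: "l \<in> {1..d}"
  show ?thesis
  proof (cases "l = 1")
    case True
    have "norm (lam 1) = rr" by (subst lam1) (use rr_gt1 in simp)
    then show ?thesis using True by simp
  next
    case False
    with l have "l \<in> {2..d}" by auto
    then show ?thesis using ss unfolding standing_setting_def by (auto intro: less_imp_le)
  qed
qed

lemma norm_lam_less: "l \<in> {2..d} \<Longrightarrow> norm (lam l) < rr"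
  using ss unfolding standing_setting_def by auto

lemma c1_nz: "c 1 \<noteq> 0"
  using ss unfolding standing_setting_def by auto

lemma aa_int: "\<exists>zf. \<forall>n\<ge>1. aa n = of_int (zf n)"
proof -
  have "\<forall>n. \<exists>z. n \<ge> 1 \<longrightarrow> aa n = of_int z"
  proof
    fix n
    show "\<exists>z. n \<ge> 1 \<longrightarrow> aa n = of_int z"
    proof (cases "n \<ge> 1")
      case True
      then show ?thesis using ss unfolding standing_setting_def by blast
    qed auto
  qed
  then show ?thesis by (rule choice)
qed

definition "CC = (\<Sum>l=1..d. norm (c l))"

lemma CC_nonneg: "CC \<ge> 0"
  unfolding CC_def by (simp add: sum_nonneg)

lemma aa_bound: "norm (aa n) \<le> CC * rr ^ n"
proof -
  have "norm (aa n) \<le> (\<Sum>l=1..d. norm (c l * lam l ^ n))"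
    unfolding lrs_def by (rule norm_sum)
  also have "\<dots> \<le> (\<Sum>l=1..d. norm (c l) * rr ^ n)"
  proof (rule sum_mono)
    fix l assume l: "l \<in> {1..d}"
    have "norm (lam l) ^ n \<le> rr ^ n"
      by (rule power_mono[OF norm_lam_le[OF l]]) simp
    then show "norm (c l * lam l ^ n) \<le> norm (c l) * rr ^ n"
      by (simp add: norm_mult norm_power mult_left_mono)
  qed
  also have "\<dots> = CC * rr ^ n" unfolding CC_def by (simp add: sum_distrib_right)
  finally show ?thesis .
qed

lemma galois_lam:
  assumes "ev P (lam 1) = 0" "l \<in> {1..d}"
  shows "ev P (lam l) = 0"
proof -
  from ss obtain p :: "int poly" where p: "degree p = d" "irreducible p"
    "{z. poly (map_poly of_int p) z = 0} = lam ` {1..d}"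
    unfolding standing_setting_def by blast
  have dp: "degree p \<noteq> 0" using p(1) d_ge1 by simp
  have "lam 1 \<in> lam ` {1..d}" using d_ge1 by auto
  hence z: "ev p (lam 1) = 0" using p(3) by blast
  have "lam l \<in> lam ` {1..d}" using assms(2) by auto
  hence w: "ev p (lam l) = 0" using p(3) by blast
  show ?thesis by (rule galois[OF p(2) dp z w assms(1)])
qed


lemma sum_first:
  fixes F :: "nat \<Rightarrow> 'b::comm_monoid_add"
  shows "(\<Sum>l=1..d. F l) = F 1 + (\<Sum>l=2..d. F l)"
  using sum.atLeast_Suc_atMost[OF d_ge1, of F] by (simp add: numeral_2_eq_2)

lemma norm_lam1_pow: "norm (lam 1 ^ n) = rr ^ n"
proof -
  have "norm (lam 1) = rr" by (subst lam1) (use rr_gt1 in simp)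
  then show ?thesis by (simp add: norm_power)
qed

lemma pattern_bound:
  fixes m :: nat and s :: "nat \<Rightarrow> int" and g :: "nat \<Rightarrow> nat"
  shows "\<exists>\<delta>>0. \<forall>n\<ge>1. (\<Sum>k=1..m. of_int (s k) * aa (n + g k)) = 0 \<or>
            norm (\<Sum>k=1..m. of_int (s k) * aa (n + g k)) \<ge> \<delta> * rr ^ n"
proof -
  define w where "w l = (\<Sum>k=1..m. of_int (s k) * lam l ^ g k)" for l
  define T where "T n = (\<Sum>k=1..m. of_int (s k) * aa (n + g k))" for n
  have Texp: "T n = (\<Sum>l=1..d. c l * lam l ^ n * w l)" for n
  proof -
    have "T n = (\<Sum>k=1..m. \<Sum>l=1..d. of_int (s k) * (c l * lam l ^ (n + g k)))"
      by (simp add: T_def lrs_def sum_distrib_left)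
    also have "\<dots> = (\<Sum>l=1..d. \<Sum>k=1..m. of_int (s k) * (c l * lam l ^ (n + g k)))"
      by (rule sum.swap)
    also have "\<dots> = (\<Sum>l=1..d. c l * lam l ^ n * w l)"
      by (simp add: w_def sum_distrib_left power_add mult_ac)
    finally show ?thesis .
  qed
  define P where "P = (\<Sum>k=1..m. monom (s k) (g k))"
  have Pw: "ev P (lam l) = w l" for l
    by (simp add: P_def ev_sum ev_monom w_def)
  show ?thesis
  proof (cases "w 1 = 0")
    case True
    have "\<forall>l\<in>{1..d}. w l = 0"
      using galois_lam[of P] Pw True by metis
    then have "T n = 0" for n unfolding Texp by simp
    then show ?thesis unfolding T_def by (intro exI[of _ 1]) auto
  next
    case False
    define K where "K = norm (c 1) * norm (w 1)"
    have Kpos: "K > 0" unfolding K_def using False c1_nz by simp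
    define h where "h n = (\<Sum>l=2..d. norm (c l) * norm (w l) * (norm (lam l) / rr) ^ n)" for n
    have "h \<longlonglongrightarrow> (\<Sum>l=2..d. 0)"
      unfolding h_def
    proof (rule tendsto_sum)
      fix l assume l: "l \<in> {2..d}"
      have "(\<lambda>n. (norm (lam l) / rr) ^ n) \<longlonglongrightarrow> 0"
        by (rule LIMSEQ_realpow_zero) (use norm_lam_less[OF l] rr_gt1 in auto)
      then show "(\<lambda>n. norm (c l) * norm (w l) * (norm (lam l) / rr) ^ n) \<longlonglongrightarrow> 0"
        by (rule tendsto_mult_right_zero)
    qed
    then have "h \<longlonglongrightarrow> 0" by simp
    from order_tendstoD(2)[OF this, of "K/2"] Kpos
    obtain N where N: "\<And>n. n \<ge> N \<Longrightarrow> h n < K / 2"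
      unfolding eventually_sequentially by auto
    from aa_int obtain zf where zf: "\<And>n. n \<ge> 1 \<Longrightarrow> aa n = of_int (zf n)" by blast
    have rpos: "rr > 0" using rr_gt1 by simp
    show ?thesis
      unfolding T_def[symmetric]
    proof (rule exI[of _ "min (K/2) (1 / rr ^ N)"], intro conjI allI impI)
      show "min (K/2) (1 / rr ^ N) > 0" using Kpos rpos by simp
    next
      fix n :: nat assume n1: "n \<ge> 1"
      show "T n = 0 \<or> norm (T n) \<ge> min (K/2) (1 / rr ^ N) * rr ^ n"
      proof (cases "n \<ge> N")
        case True
        have tail: "norm (\<Sum>l=2..d. c l * lam l ^ n * w l) \<le> rr ^ n * h n"
        proof -
          have "norm (\<Sum>l=2..d. c l * lam l ^ n * w l) \<le> (\<Sum>l=2..d. norm (c l * lam l ^ n * w l))"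
            by (rule norm_sum)
          also have "\<dots> = (\<Sum>l=2..d. rr ^ n * (norm (c l) * norm (w l) * (norm (lam l) / rr) ^ n))"
            using rpos by (intro sum.cong) (simp_all add: norm_mult norm_power power_divide)
          also have "\<dots> = rr ^ n * h n" by (simp add: h_def sum_distrib_left)
          finally show ?thesis .
        qed
        have head: "norm (c 1 * lam 1 ^ n * w 1) = K * rr ^ n"
          unfolding norm_mult norm_lam1_pow K_def by simp
        have "T n = c 1 * lam 1 ^ n * w 1 + (\<Sum>l=2..d. c l * lam l ^ n * w l)"
          unfolding Texp by (rule sum_first)
        then have "norm (T n) \<ge> K * rr ^ n - rr ^ n * h n"
          using norm_diff_ineq[of "c 1 * lam 1 ^ n * w 1" "\<Sum>l=2..d. c l * lam l ^ n * w l"] head tail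
          by (smt (verit, ccfv_SIG) norm_minus_cancel norm_triangle_ineq4)
        moreover have "rr ^ n * h n \<le> rr ^ n * (K / 2)"
          using N[OF True] rpos by (intro mult_left_mono) auto
        ultimately have "norm (T n) \<ge> (K/2) * rr ^ n" by (simp add: algebra_simps)
        moreover have "min (K/2) (1 / rr ^ N) * rr ^ n \<le> (K/2) * rr ^ n"
          using rpos by (intro mult_right_mono) auto
        ultimately show ?thesis by simp
      next
        case False
        have "T n = of_int (\<Sum>k=1..m. s k * zf (n + g k))"
          unfolding T_def using n1 by (simp add: zf)
        then obtain z where z: "T n = of_int z" by blast
        show ?thesis
        proof (cases "z = 0")
          case True then show ?thesis using z by simp
        next
          case False
          then have "norm (T n) \<ge> 1" using z by simp
          moreover have "rr ^ n \<le> rr ^ N" using \<open>\<not> n \<ge> N\<close> rr_gt1 by (intro power_increasing) auto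
          then have "(1 / rr ^ N) * rr ^ n \<le> 1" using rpos by (simp add: field_simps)
          then have "min (K/2) (1 / rr ^ N) * rr ^ n \<le> 1"
            by (smt (verit) min_def mult_right_mono rpos zero_less_power)
          ultimately show ?thesis by simp
        qed
      qed
    qed
  qed
qed


lemma bgap:
  fixes m G :: nat
  shows "\<exists>\<delta>>0. \<forall>(\<epsilon>::nat\<Rightarrow>int) (e::nat\<Rightarrow>nat). (\<forall>k\<in>{1..m}. \<epsilon> k = 1 \<or> \<epsilon> k = -1) \<longrightarrow> 1 \<le> e 1 \<longrightarrow>
     (\<forall>k\<in>{2..m}. e (k - 1) \<le> e k) \<longrightarrow> (\<forall>k\<in>{2..m}. e k \<le> e (k - 1) + G) \<longrightarrow>
     (\<Sum>k=1..m. of_int (\<epsilon> k) * aa (e k)) = 0 \<or> norm (\<Sum>k=1..m. of_int (\<epsilon> k) * aa (e k)) \<ge> \<delta> * rr ^ e 1"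
proof -
  define S where "S = ({1..m} \<rightarrow>\<^sub>E {-1,1::int}) \<times> ({1..m} \<rightarrow>\<^sub>E {0..m*G})"
  have fin: "finite S" unfolding S_def by (intro finite_cartesian_product finite_PiE) auto
  define Q where "Q = (\<lambda>(sg :: (nat\<Rightarrow>int)\<times>(nat\<Rightarrow>nat)) \<delta>. \<forall>n\<ge>1.
      (\<Sum>k=1..m. of_int (fst sg k) * aa (n + snd sg k)) = 0 \<or>
      norm (\<Sum>k=1..m. of_int (fst sg k) * aa (n + snd sg k)) \<ge> \<delta> * rr ^ n)"
  have "\<exists>\<delta>>0. \<forall>x\<in>S. Q x \<delta>"
  proof (rule finite_delta[OF fin])
    show "\<forall>x\<in>S. \<exists>\<delta>>0. Q x \<delta>"
    proof
      fix x :: "(nat\<Rightarrow>int)\<times>(nat\<Rightarrow>nat)"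
      show "\<exists>\<delta>>0. Q x \<delta>" unfolding Q_def using pattern_bound[where m=m and s="fst x" and g="snd x"] by simp
    qed
  next
    fix x \<delta> \<delta>' assume q: "Q x \<delta>" and d': "0 < \<delta>'" "\<delta>' \<le> \<delta>"
    show "Q x \<delta>'"
      unfolding Q_def
    proof (intro allI impI)
      fix n :: nat assume "n \<ge> 1"
      have "\<delta>' * rr ^ n \<le> \<delta> * rr ^ n" using d' rr_gt1 by (intro mult_right_mono) auto
      then show "(\<Sum>k=1..m. of_int (fst x k) * aa (n + snd x k)) = 0 \<or>
        norm (\<Sum>k=1..m. of_int (fst x k) * aa (n + snd x k)) \<ge> \<delta>' * rr ^ n"
        using q \<open>n \<ge> 1\<close> unfolding Q_def by force
    qed
  qed
  then obtain \<delta> where \<delta>: "\<delta> > 0" "\<forall>x\<in>S. Q x \<delta>" by blast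
  show ?thesis
  proof (rule exI[of _ \<delta>], intro conjI allI impI)
    show "\<delta> > 0" by fact
  next
    fix \<epsilon> :: "nat \<Rightarrow> int" and e :: "nat \<Rightarrow> nat"
    assume h1: "\<forall>k\<in>{1..m}. \<epsilon> k = 1 \<or> \<epsilon> k = -1" and h2: "1 \<le> e 1"
      and h3: "\<forall>k\<in>{2..m}. e (k - 1) \<le> e k" and h4: "\<forall>k\<in>{2..m}. e k \<le> e (k - 1) + G"
    define sg where "sg = (restrict \<epsilon> {1..m}, restrict (\<lambda>k. e k - e 1) {1..m})"
    have "sg \<in> S"
      unfolding S_def sg_def
    proof (intro SigmaI)
      show "restrict \<epsilon> {1..m} \<in> {1..m} \<rightarrow>\<^sub>E {-1, 1}" using h1 by auto
      show "restrict (\<lambda>k. e k - e 1) {1..m} \<in> {1..m} \<rightarrow>\<^sub>E {0..m * G}"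
      proof
        fix k assume k: "k \<in> {1..m}"
        have "e k \<le> e 1 + (k - 1) * G" using chain_gap[OF h4, of k] k by auto
        moreover have "(k - 1) * G \<le> m * G" using k by (intro mult_right_mono) auto
        ultimately have "e k \<le> e 1 + m * G" by linarith
        then show "restrict (\<lambda>k. e k - e 1) {1..m} k \<in> {0..m * G}" using k by auto
      qed auto
    qed
    then have q: "Q sg \<delta>" using \<delta> by blast
    have eq: "(\<Sum>k=1..m. of_int (\<epsilon> k) * aa (e k)) = (\<Sum>k=1..m. of_int (fst sg k) * aa (e 1 + snd sg k))"
    proof (rule sum.cong)
      fix k assume k: "k \<in> {1..m}"
      have "e 1 \<le> e k" using chain_mono[OF h3, of 1 k] k by auto
      then show "of_int (\<epsilon> k) * aa (e k) = of_int (fst sg k) * aa (e 1 + snd sg k)"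
        using k by (simp add: sg_def)
    qed simp
    show "(\<Sum>k=1..m. of_int (\<epsilon> k) * aa (e k)) = 0 \<or> norm (\<Sum>k=1..m. of_int (\<epsilon> k) * aa (e k)) \<ge> \<delta> * rr ^ e 1"
      unfolding eq using q h2 unfolding Q_def by auto
  qed
qed


definition Qprop :: "nat \<Rightarrow> real \<Rightarrow> bool" where
  "Qprop m \<delta> \<longleftrightarrow> (\<forall>(\<epsilon>::nat\<Rightarrow>int) (e::nat\<Rightarrow>nat). (\<forall>k\<in>{1..m}. \<epsilon> k = 1 \<or> \<epsilon> k = -1) \<longrightarrow> 1 \<le> e 1 \<longrightarrow>
     (\<forall>k\<in>{2..m}. e (k - 1) \<le> e k) \<longrightarrow>
     (\<Sum>k=1..m. of_int (\<epsilon> k) * aa (e k)) = 0 \<or> norm (\<Sum>k=1..m. of_int (\<epsilon> k) * aa (e k)) \<ge> \<delta> * rr ^ e 1)"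

lemma Qprop_mono:
  assumes "Qprop m \<delta>" "0 < \<delta>'" "\<delta>' \<le> \<delta>"
  shows "Qprop m \<delta>'"
  unfolding Qprop_def
proof (intro allI impI)
  fix \<epsilon> :: "nat \<Rightarrow> int" and e :: "nat \<Rightarrow> nat"
  assume "\<forall>k\<in>{1..m}. \<epsilon> k = 1 \<or> \<epsilon> k = -1" "1 \<le> e 1" "\<forall>k\<in>{2..m}. e (k - 1) \<le> e k"
  then have "(\<Sum>k=1..m. of_int (\<epsilon> k) * aa (e k)) = 0 \<or> norm (\<Sum>k=1..m. of_int (\<epsilon> k) * aa (e k)) \<ge> \<delta> * rr ^ e 1"
    using assms(1) unfolding Qprop_def by blast
  moreover have "\<delta>' * rr ^ e 1 \<le> \<delta> * rr ^ e 1" using assms(3) rr_gt1 by (intro mult_right_mono) auto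
  ultimately show "(\<Sum>k=1..m. of_int (\<epsilon> k) * aa (e k)) = 0 \<or> norm (\<Sum>k=1..m. of_int (\<epsilon> k) * aa (e k)) \<ge> \<delta>' * rr ^ e 1"
    by linarith
qed

lemma head_bound:
  fixes \<epsilon> :: "nat \<Rightarrow> int" and e :: "nat \<Rightarrow> nat"
  assumes h1: "\<forall>k\<in>{1..m}. \<epsilon> k = 1 \<or> \<epsilon> k = -1" and h3: "\<forall>k\<in>{2..m}. e (k - 1) \<le> e k"
    and j: "2 \<le> j" "j \<le> m"
  shows "norm (\<Sum>k=1..j-1. of_int (\<epsilon> k) * aa (e k)) \<le> m * CC * rr ^ e (j - 1)"
proof -
  have "norm (\<Sum>k=1..j-1. of_int (\<epsilon> k) * aa (e k)) \<le> (\<Sum>k=1..j-1. norm (of_int (\<epsilon> k) * aa (e k)))"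
    by (rule norm_sum)
  also have "\<dots> \<le> (\<Sum>k=1..j-1. CC * rr ^ e (j - 1))"
  proof (rule sum_mono)
    fix k assume k: "k \<in> {1..j-1}"
    have "\<epsilon> k = 1 \<or> \<epsilon> k = -1" using h1 k j by auto
    then have "norm (of_int (\<epsilon> k) :: complex) = 1" by auto
    then have "norm (of_int (\<epsilon> k) * aa (e k)) = norm (aa (e k))" by (simp add: norm_mult)
    also have "\<dots> \<le> CC * rr ^ e k" by (rule aa_bound)
    also have "\<dots> \<le> CC * rr ^ e (j - 1)"
    proof (intro mult_left_mono power_increasing CC_nonneg)
      show "e k \<le> e (j - 1)" using chain_mono[OF h3, of k "j - 1"] k j by auto
    qed (use rr_gt1 in auto)
    finally show "norm (of_int (\<epsilon> k) * aa (e k)) \<le> CC * rr ^ e (j - 1)" .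
  qed
  also have "\<dots> = (j - 1) * (CC * rr ^ e (j - 1))" by simp
  also have "\<dots> \<le> m * (CC * rr ^ e (j - 1))"
    using j CC_nonneg rr_gt1 by (intro mult_right_mono) auto
  finally show ?thesis by (simp add: mult_ac)
qed

lemma head_Q:
  fixes \<epsilon> :: "nat \<Rightarrow> int" and e :: "nat \<Rightarrow> nat"
  assumes Q: "Qprop (j - 1) \<delta>"
    and h1: "\<forall>k\<in>{1..m}. \<epsilon> k = 1 \<or> \<epsilon> k = -1" and h2: "1 \<le> e 1" and h3: "\<forall>k\<in>{2..m}. e (k - 1) \<le> e k"
    and j: "2 \<le> j" "j \<le> m"
  shows "(\<Sum>k=1..j-1. of_int (\<epsilon> k) * aa (e k)) = 0 \<or> norm (\<Sum>k=1..j-1. of_int (\<epsilon> k) * aa (e k)) \<ge> \<delta> * rr ^ e 1"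
proof -
  have "\<forall>k\<in>{1..j-1}. \<epsilon> k = 1 \<or> \<epsilon> k = -1" using h1 j by auto
  moreover have "\<forall>k\<in>{2..j-1}. e (k - 1) \<le> e k" using h3 j by auto
  ultimately show ?thesis using Q h2 unfolding Qprop_def by blast
qed

lemma tail_Q:
  fixes \<epsilon> :: "nat \<Rightarrow> int" and e :: "nat \<Rightarrow> nat"
  assumes Q: "Qprop (m - j + 1) \<delta>"
    and h1: "\<forall>k\<in>{1..m}. \<epsilon> k = 1 \<or> \<epsilon> k = -1" and h2: "1 \<le> e 1" and h3: "\<forall>k\<in>{2..m}. e (k - 1) \<le> e k"
    and j: "2 \<le> j" "j \<le> m"
  shows "(\<Sum>k=j..m. of_int (\<epsilon> k) * aa (e k)) = 0 \<or> norm (\<Sum>k=j..m. of_int (\<epsilon> k) * aa (e k)) \<ge> \<delta> * rr ^ e j"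
proof -
  define \<epsilon>' where "\<epsilon>' k = \<epsilon> (k + j - 1)" for k
  define e' where "e' k = e (k + j - 1)" for k
  have eq: "(\<Sum>k=j..m. of_int (\<epsilon> k) * aa (e k)) = (\<Sum>k=1..m-j+1. of_int (\<epsilon>' k) * aa (e' k))"
    unfolding \<epsilon>'_def e'_def by (rule sum_shift) (use j in auto)
  have c1: "\<forall>k\<in>{1..m-j+1}. \<epsilon>' k = 1 \<or> \<epsilon>' k = -1"
  proof
    fix k assume "k \<in> {1..m-j+1}"
    then have "k + j - 1 \<in> {1..m}" using j by auto
    then show "\<epsilon>' k = 1 \<or> \<epsilon>' k = -1" using h1 unfolding \<epsilon>'_def by blast
  qed
  have "e 1 \<le> e j" using chain_mono[OF h3, of 1 j] j by auto
  then have c2: "1 \<le> e' 1" using h2 unfolding e'_def by simp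
  have c3: "\<forall>k\<in>{2..m-j+1}. e' (k - 1) \<le> e' k"
  proof
    fix k assume k: "k \<in> {2..m-j+1}"
    then have "k + j - 1 \<in> {2..m}" using j by auto
    then have "e (k + j - 1 - 1) \<le> e (k + j - 1)" using h3 by blast
    moreover have "k + j - 1 - 1 = k - 1 + j - 1" using k by auto
    ultimately show "e' (k - 1) \<le> e' k" unfolding e'_def by simp
  qed
  have "e' 1 = e j" unfolding e'_def by simp
  moreover have "(\<Sum>k=1..m-j+1. of_int (\<epsilon>' k) * aa (e' k)) = 0 \<or>
     norm (\<Sum>k=1..m-j+1. of_int (\<epsilon>' k) * aa (e' k)) \<ge> \<delta> * rr ^ e' 1"
    using Q c1 c2 c3 unfolding Qprop_def by blast
  ultimately show ?thesis unfolding eq by simp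
qed

lemma Qexists: "\<exists>\<delta>>0. Qprop m \<delta>"
proof (induction m rule: less_induct)
  case (less m)
  have "\<exists>\<delta>>0. \<forall>m'\<in>{..<m}. Qprop m' \<delta>"
  proof (rule finite_delta)
    show "finite {..<m}" by simp
    show "\<forall>x\<in>{..<m}. \<exists>\<delta>>0. Qprop x \<delta>" using less by blast
    show "\<And>x \<delta> \<delta>'. Qprop x \<delta> \<Longrightarrow> 0 < \<delta>' \<Longrightarrow> \<delta>' \<le> \<delta> \<Longrightarrow> Qprop x \<delta>'"
      by (rule Qprop_mono)
  qed
  then obtain \<delta>0 where d0: "\<delta>0 > 0" "\<And>m'. m' < m \<Longrightarrow> Qprop m' \<delta>0" by auto
  obtain G where G: "2 * m * CC / \<delta>0 < rr ^ G" using real_arch_pow[OF rr_gt1] by blast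
  have G': "m * CC \<le> (\<delta>0 / 2) * rr ^ G" using G d0(1) by (simp add: field_simps)
  obtain \<delta>1 where d1: "\<delta>1 > 0" and bg: "\<forall>(\<epsilon>::nat\<Rightarrow>int) (e::nat\<Rightarrow>nat). (\<forall>k\<in>{1..m}. \<epsilon> k = 1 \<or> \<epsilon> k = -1) \<longrightarrow> 1 \<le> e 1 \<longrightarrow>
     (\<forall>k\<in>{2..m}. e (k - 1) \<le> e k) \<longrightarrow> (\<forall>k\<in>{2..m}. e k \<le> e (k - 1) + G) \<longrightarrow>
     (\<Sum>k=1..m. of_int (\<epsilon> k) * aa (e k)) = 0 \<or> norm (\<Sum>k=1..m. of_int (\<epsilon> k) * aa (e k)) \<ge> \<delta>1 * rr ^ e 1"
    using bgap[of m G] by blast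
  have rpos: "rr > 0" using rr_gt1 by simp
  show ?case
  proof (rule exI[of _ "min \<delta>1 (\<delta>0 / 2)"], intro conjI)
    show "min \<delta>1 (\<delta>0 / 2) > 0" using d0 d1 by simp
    show "Qprop m (min \<delta>1 (\<delta>0 / 2))"
      unfolding Qprop_def
    proof (intro allI impI)
      fix \<epsilon> :: "nat \<Rightarrow> int" and e :: "nat \<Rightarrow> nat"
      assume h1: "\<forall>k\<in>{1..m}. \<epsilon> k = 1 \<or> \<epsilon> k = -1" and h2: "1 \<le> e 1"
        and h3: "\<forall>k\<in>{2..m}. e (k - 1) \<le> e k"
      have mle: "min \<delta>1 (\<delta>0 / 2) * rr ^ e 1 \<le> \<delta>1 * rr ^ e 1"
                "min \<delta>1 (\<delta>0 / 2) * rr ^ e 1 \<le> (\<delta>0 / 2) * rr ^ e 1"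
        using rpos by (intro mult_right_mono; simp)+
      show "(\<Sum>k=1..m. of_int (\<epsilon> k) * aa (e k)) = 0 \<or> norm (\<Sum>k=1..m. of_int (\<epsilon> k) * aa (e k)) \<ge> min \<delta>1 (\<delta>0 / 2) * rr ^ e 1"
      proof (cases "\<forall>k\<in>{2..m}. e k \<le> e (k - 1) + G")
        case True
        have "(\<Sum>k=1..m. of_int (\<epsilon> k) * aa (e k)) = 0 \<or> norm (\<Sum>k=1..m. of_int (\<epsilon> k) * aa (e k)) \<ge> \<delta>1 * rr ^ e 1"
          by (rule bg[rule_format]) (use h1 h2 h3 True in auto)
        then show ?thesis using mle(1) by auto
      next
        case False
        then obtain j where "j \<in> {2..m}" "\<not> e j \<le> e (j - 1) + G" by blast
        then have j: "2 \<le> j" "j \<le> m" and gap: "e (j - 1) + G < e j" by auto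
        define A where "A = (\<Sum>k=1..j-1. of_int (\<epsilon> k) * aa (e k))"
        define B where "B = (\<Sum>k=j..m. of_int (\<epsilon> k) * aa (e k))"
        have TAB: "(\<Sum>k=1..m. of_int (\<epsilon> k) * aa (e k)) = A + B"
          unfolding A_def B_def by (rule sum_split) (use j in auto)
        have QA: "A = 0 \<or> norm A \<ge> \<delta>0 * rr ^ e 1"
          unfolding A_def by (rule head_Q[OF d0(2) h1 h2 h3 j]) (use j in auto)
        have QB: "B = 0 \<or> norm B \<ge> \<delta>0 * rr ^ e j"
          unfolding B_def by (rule tail_Q[OF d0(2) h1 h2 h3 j]) (use j in auto)
        have e1j: "e 1 \<le> e j" using chain_mono[OF h3, of 1 j] j by auto
        have "norm A \<le> m * CC * rr ^ e (j - 1)"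
          unfolding A_def by (rule head_bound[OF h1 h3 j])
        also have "\<dots> \<le> (\<delta>0 / 2) * rr ^ G * rr ^ e (j - 1)"
          using G' rpos by (intro mult_right_mono) auto
        also have "\<dots> = (\<delta>0 / 2) * rr ^ (G + e (j - 1))" by (simp add: power_add)
        also have "\<dots> \<le> (\<delta>0 / 2) * rr ^ e j"
          using gap rr_gt1 d0(1) by (intro mult_left_mono power_increasing) auto
        finally have Ab: "norm A \<le> (\<delta>0 / 2) * rr ^ e j" .
        have pj: "rr ^ e 1 \<le> rr ^ e j" using e1j rr_gt1 by (intro power_increasing) auto
        show ?thesis
        proof (cases "B = 0")
          case True
          show ?thesis
          proof (cases "A = 0")
            case True
            then show ?thesis using TAB \<open>B = 0\<close> by simp
          next
            case False
            with QA have "norm A \<ge> \<delta>0 * rr ^ e 1" by simp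
            moreover have "(\<delta>0 / 2) * rr ^ e 1 \<le> \<delta>0 * rr ^ e 1"
              using d0(1) rpos by (intro mult_right_mono) auto
            ultimately show ?thesis using TAB \<open>B = 0\<close> mle(2) by auto
          qed
        next
          case False
          with QB have nB: "norm B \<ge> \<delta>0 * rr ^ e j" by simp
          have "norm (A + B) \<ge> norm B - norm A" using norm_diff_ineq[of B A] by (simp add: add.commute)
          then have "norm (A + B) \<ge> (\<delta>0 / 2) * rr ^ e j" using nB Ab by linarith
          moreover have "(\<delta>0 / 2) * rr ^ e 1 \<le> (\<delta>0 / 2) * rr ^ e j"
            using pj d0(1) by (intro mult_left_mono) auto
          ultimately show ?thesis using TAB mle by auto
        qed
      qed
    qed
  qed
qed


lemma Lexists: "\<exists>L::nat. \<forall>(\<epsilon> :: nat \<Rightarrow> int) (i :: nat \<Rightarrow> nat) j.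
       (\<forall>k\<in>{1..m}. \<epsilon> k = 1 \<or> \<epsilon> k = -1) \<longrightarrow>
       1 \<le> i 1 \<longrightarrow>
       (\<forall>k\<in>{2..m}. i (k - 1) \<le> i k) \<longrightarrow>
       j \<in> {2..m} \<longrightarrow> i j - i (j - 1) > L \<longrightarrow>
       (\<Sum>k=1..m. of_int (\<epsilon> k) * lrs d c lam (i k)) = 0 \<longrightarrow>
       (\<Sum>k=1..j-1. of_int (\<epsilon> k) * lrs d c lam (i k)) = 0 \<and>
       (\<Sum>k=j..m. of_int (\<epsilon> k) * lrs d c lam (i k)) = 0"
proof -
  have "\<exists>\<delta>>0. \<forall>m'\<in>{..<m}. Qprop m' \<delta>"
  proof (rule finite_delta)
    show "finite {..<m}" by simp
    show "\<forall>x\<in>{..<m}. \<exists>\<delta>>0. Qprop x \<delta>" using Qexists by blast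
    show "\<And>x \<delta> \<delta>'. Qprop x \<delta> \<Longrightarrow> 0 < \<delta>' \<Longrightarrow> \<delta>' \<le> \<delta> \<Longrightarrow> Qprop x \<delta>'"
      by (rule Qprop_mono)
  qed
  then obtain \<delta>0 where d0: "\<delta>0 > 0" "\<And>m'. m' < m \<Longrightarrow> Qprop m' \<delta>0" by auto
  obtain L where L: "m * CC / \<delta>0 < rr ^ L" using real_arch_pow[OF rr_gt1] by blast
  have L': "m * CC < \<delta>0 * rr ^ L" using L d0(1) by (simp add: field_simps)
  have rpos: "rr > 0" using rr_gt1 by simp
  show ?thesis
  proof (rule exI[of _ L], intro allI impI)
    fix \<epsilon> :: "nat \<Rightarrow> int" and e :: "nat \<Rightarrow> nat" and j :: nat
    assume h1: "\<forall>k\<in>{1..m}. \<epsilon> k = 1 \<or> \<epsilon> k = -1" and h2: "1 \<le> e 1"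
      and h3: "\<forall>k\<in>{2..m}. e (k - 1) \<le> e k" and jm: "j \<in> {2..m}" and gp: "e j - e (j - 1) > L"
      and T0: "(\<Sum>k=1..m. of_int (\<epsilon> k) * lrs d c lam (e k)) = 0"
    from jm have j: "2 \<le> j" "j \<le> m" by auto
    have gap: "e (j - 1) + L \<le> e j" using gp by linarith
    define A where "A = (\<Sum>k=1..j-1. of_int (\<epsilon> k) * aa (e k))"
    define B where "B = (\<Sum>k=j..m. of_int (\<epsilon> k) * aa (e k))"
    have TAB: "(\<Sum>k=1..m. of_int (\<epsilon> k) * aa (e k)) = A + B"
      unfolding A_def B_def by (rule sum_split) (use j in auto)
    have QB: "B = 0 \<or> norm B \<ge> \<delta>0 * rr ^ e j"
      unfolding B_def by (rule tail_Q[OF d0(2) h1 h2 h3 j]) (use j in auto)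
    have "norm A \<le> m * CC * rr ^ e (j - 1)"
      unfolding A_def by (rule head_bound[OF h1 h3 j])
    also have "\<dots> < \<delta>0 * rr ^ L * rr ^ e (j - 1)"
      using L' rpos by (intro mult_strict_right_mono) auto
    also have "\<dots> = \<delta>0 * rr ^ (L + e (j - 1))" by (simp add: power_add)
    also have "\<dots> \<le> \<delta>0 * rr ^ e j"
      using gap rr_gt1 d0(1) by (intro mult_left_mono power_increasing) auto
    finally have Ab: "norm A < \<delta>0 * rr ^ e j" .
    have AB: "A = - B" using T0 TAB by (simp add: eq_neg_iff_add_eq_0)
    have "B = 0"
    proof (rule ccontr)
      assume "B \<noteq> 0"
      with QB have "norm B \<ge> \<delta>0 * rr ^ e j" by simp
      moreover have "norm A = norm B" using AB by simp
      ultimately show False using Ab by simp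
    qed
    then show "A = 0 \<and> B = 0" using AB by simp
  qed
qed

end

theorem lemma6p5:
  fixes d :: nat and c lam :: "nat \<Rightarrow> complex"
  assumes "standing_setting d c lam"
  shows "\<exists>L :: nat \<Rightarrow> nat. mono L \<and>
    (\<forall>m. \<forall>(\<epsilon> :: nat \<Rightarrow> int) (i :: nat \<Rightarrow> nat) j.
       (\<forall>k\<in>{1..m}. \<epsilon> k = 1 \<or> \<epsilon> k = -1) \<longrightarrow>
       1 \<le> i 1 \<longrightarrow>
       (\<forall>k\<in>{2..m}. i (k - 1) \<le> i k) \<longrightarrow>
       j \<in> {2..m} \<longrightarrow> i j - i (j - 1) > L m \<longrightarrow>
       (\<Sum>k=1..m. of_int (\<epsilon> k) * lrs d c lam (i k)) = 0 \<longrightarrow>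
       (\<Sum>k=1..j-1. of_int (\<epsilon> k) * lrs d c lam (i k)) = 0 \<and>
       (\<Sum>k=j..m. of_int (\<epsilon> k) * lrs d c lam (i k)) = 0)"
proof -
  define P where "P = (\<lambda>m (L::nat). \<forall>(\<epsilon> :: nat \<Rightarrow> int) (i :: nat \<Rightarrow> nat) j.
       (\<forall>k\<in>{1..m}. \<epsilon> k = 1 \<or> \<epsilon> k = -1) \<longrightarrow>
       1 \<le> i 1 \<longrightarrow>
       (\<forall>k\<in>{2..m}. i (k - 1) \<le> i k) \<longrightarrow>
       j \<in> {2..m} \<longrightarrow> i j - i (j - 1) > L \<longrightarrow>
       (\<Sum>k=1..m. of_int (\<epsilon> k) * lrs d c lam (i k)) = 0 \<longrightarrow>
       (\<Sum>k=1..j-1. of_int (\<epsilon> k) * lrs d c lam (i k)) = 0 \<and>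
       (\<Sum>k=j..m. of_int (\<epsilon> k) * lrs d c lam (i k)) = 0)"
  have "\<forall>m. \<exists>L. P m L" unfolding P_def using Lexists[OF assms] by blast
  then obtain L0 where L0: "\<And>m. P m (L0 m)" by metis
  have Pmono: "P m L' " if "P m L" "L \<le> L'" for m L L'
    using that unfolding P_def by (meson le_less_trans)
  define L where "L m = Max (L0 ` {..m})" for m
  have "mono L"
    unfolding L_def by (intro monoI Max_mono) auto
  moreover have "P m (L m)" for m
    by (rule Pmono[OF L0]) (auto simp: L_def)
  ultimately show ?thesis unfolding P_def by blast
qed

end
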